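(* There is an absolute constant $C$ such that the following holds. Let $M$ be a deterministic complex $2n\times 2n$ matrix, let $P_n$ be the permutation matrix of a uniformly random permutation of $[n]$, and let $\mathsf P=\begin{pmatrix}0&P_n-\mathbb EP_n\\(P_n-\mathbb EP_n)^*&0\end{pmatrix}$. Then for every $i\in[n]$, each of the following holds up to an additive error of absolute value at most $C\|M\|^2/\sqrt n$: (i) $\mathbb E[(\mathsf PM\mathsf PM)_{i,i}]=M_{i,i}\cdot\frac1n\sum_{j=1}^nM_{n+j,n+j}$; (ii) $\mathbb E[(\mathsf PM\mathsf PM)_{n+i,n+i}]=M_{n+i,n+i}\cdot\frac1n\sum_{j=1}^nM_{j,j}$; (iii) $\mathbb E[(\mathsf PM\mathsf PM)_{n+i,i}]=M_{n+i,i}\cdot\frac1n\sum_{j=1}^nM_{j,j}$; (iv) $\mathbb E[(\mathsf PM\mathsf PM)_{i,n+i}]=M_{i,n+i}\cdot\frac1n\sum_{j=1}^nM_{n+j,n+j}$.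
   Context: $\|M\|$ is the operator norm; $\mathbb EP_n=\frac1n\mathbf 1\mathbf 1^{\mathsf T}$. *)

theory Defs
  imports Complex_Main "HOL-Combinatorics.Permutations"
begin

text \<open>Matrices of size m x m are functions nat => nat => complex, with indices
  0..m-1 (entries outside the range are irrelevant).\<close>

definition mmul :: "nat \<Rightarrow> (nat \<Rightarrow> nat \<Rightarrow> complex) \<Rightarrow> (nat \<Rightarrow> nat \<Rightarrow> complex) \<Rightarrow> nat \<Rightarrow> nat \<Rightarrow> complex" where
  "mmul m A B a b = (\<Sum>k<m. A a k * B k b)"

definition vnorm :: "nat \<Rightarrow> (nat \<Rightarrow> complex) \<Rightarrow> real" where
  "vnorm m v = sqrt (\<Sum>i<m. (cmod (v i))\<^sup>2)"

definition opnorm :: "nat \<Rightarrow> (nat \<Rightarrow> nat \<Rightarrow> complex) \<Rightarrow> real" where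
  "opnorm m M = Sup {vnorm m (\<lambda>a. \<Sum>b<m. M a b * v b) | v. vnorm m v \<le> 1}"

definition permmat :: "(nat \<Rightarrow> nat) \<Rightarrow> nat \<Rightarrow> nat \<Rightarrow> complex" where
  "permmat \<sigma> a b = (if \<sigma> a = b then 1 else 0)"

text \<open>Centered permutation matrix P_n - E P_n = P_n - (1/n) 1 1^T.\<close>
definition cpermmat :: "nat \<Rightarrow> (nat \<Rightarrow> nat) \<Rightarrow> nat \<Rightarrow> nat \<Rightarrow> complex" where
  "cpermmat n \<sigma> a b = permmat \<sigma> a b - 1 / of_nat n"

definition blockP :: "nat \<Rightarrow> (nat \<Rightarrow> nat) \<Rightarrow> nat \<Rightarrow> nat \<Rightarrow> complex" where
  "blockP n \<sigma> a b =
     (if a < n \<and> n \<le> b then cpermmat n \<sigma> a (b - n)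
      else if n \<le> a \<and> b < n then cnj (cpermmat n \<sigma> b (a - n))
      else 0)"

definition Eperm :: "nat \<Rightarrow> ((nat \<Rightarrow> nat) \<Rightarrow> complex) \<Rightarrow> complex" where
  "Eperm n f = (\<Sum>\<sigma>\<in>{\<sigma>. \<sigma> permutes {..<n}}. f \<sigma>) / of_nat (fact n)"

definition PMPM :: "nat \<Rightarrow> (nat \<Rightarrow> nat \<Rightarrow> complex) \<Rightarrow> (nat \<Rightarrow> nat) \<Rightarrow> nat \<Rightarrow> nat \<Rightarrow> complex" where
  "PMPM n M \<sigma> = mmul (2*n) (mmul (2*n) (mmul (2*n) (blockP n \<sigma>) M) (blockP n \<sigma>)) M"

end

theory Submission
  imports Defs "HOL-Analysis.Analysis"
begin



lemma tcomp_perm: "p permutes S \<Longrightarrow> x\<in>S \<Longrightarrow> y\<in>S \<Longrightarrow> Transposition.transpose x y \<circ> p permutes S"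
  by (simp add: permutes_compose permutes_swap_id)
lemma tt: "Transposition.transpose x y \<circ> (Transposition.transpose x y \<circ> p) = p"
  by (simp add: fun_eq_iff)

lemma perm_fix_iff:
  assumes "x \<in> S"
  shows "(p permutes S \<and> p x = x) \<longleftrightarrow> p permutes (S - {x})"
proof
  assume "p permutes S \<and> p x = x" thus "p permutes (S - {x})"
    unfolding permutes_def by auto
next
  assume a: "p permutes (S - {x})"
  have "p permutes S" using permutes_subset[OF a] by blast
  moreover have "p x = x" using a unfolding permutes_def by blast
  ultimately show "p permutes S \<and> p x = x" by blast
qed

lemma invol_card:
  fixes f :: "'a \<Rightarrow> 'a" and P Q :: "('b \<Rightarrow> 'a) \<Rightarrow> bool"
  assumes "\<And>p. P p \<Longrightarrow> Q (f \<circ> p)" "\<And>p. Q p \<Longrightarrow> P (f \<circ> p)" "\<And>u. f (f u) = u"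
  shows "card {p. P p} = card {p. Q p}"
proof -
  have "bij_betw (\<lambda>p. f \<circ> p) {p. P p} {p. Q p}"
    by (rule bij_betwI[where g="\<lambda>p. f \<circ> p"]) (use assms in \<open>auto simp: fun_eq_iff\<close>)
  thus ?thesis by (rule bij_betw_same_card)
qed

lemma card_perm_one:
  assumes "finite S" "x \<in> S" "y \<in> S"
  shows "card {p. p permutes S \<and> p x = y} = fact (card S - 1)"
proof -
  have "card {p. p permutes S \<and> p x = y} = card {p. p permutes S \<and> p x = x}"
    by (rule invol_card[where f="Transposition.transpose x y"])
       (auto simp: tcomp_perm assms)
  also have "\<dots> = card {p. p permutes (S - {x})}" using perm_fix_iff[OF assms(2)] by simp
  also have "\<dots> = fact (card S - 1)"
    using card_permutations[of "S - {x}" "card S - 1"] assms by auto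
  finally show ?thesis .
qed

lemma card_perm_two:
  assumes "finite S" "x \<in> S" "y \<in> S" "z \<in> S" "w \<in> S" "x \<noteq> z" "y \<noteq> w"
  shows "card {p. p permutes S \<and> p x = y \<and> p z = w} = fact (card S - 2)"
proof -
  define w' where "w' = Transposition.transpose x y w"
  have w'S: "w' \<in> S" "w' \<noteq> x" using assms unfolding w'_def by (auto simp: Transposition.transpose_def)
  have w'w: "Transposition.transpose x y w' = w" unfolding w'_def by simp
  have "card {p. p permutes S \<and> p x = y \<and> p z = w} = card {p. (p permutes S \<and> p x = x) \<and> p z = w'}"
    by (rule invol_card[where f="Transposition.transpose x y"])
       (auto simp: tcomp_perm assms w'_def[symmetric] w'w)
  also have "\<dots> = card {p. p permutes (S - {x}) \<and> p z = w'}" using perm_fix_iff[OF assms(2)] by simp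
  also have "\<dots> = fact (card (S - {x}) - 1)"
    using card_perm_one[of "S - {x}" z w'] assms w'S by auto
  also have "card (S - {x}) - 1 = card S - 2" using assms by auto
  finally show ?thesis .
qed


lemma card_perms_n: "card {\<sigma>. \<sigma> permutes {..<n::nat}} = fact n"
  using card_permutations[of "{..<n}" n] by simp

lemma Eperm_add: "Eperm n (\<lambda>\<sigma>. f \<sigma> + g \<sigma>) = Eperm n f + Eperm n g"
  by (simp add: Eperm_def sum.distrib add_divide_distrib)
lemma Eperm_diff: "Eperm n (\<lambda>\<sigma>. f \<sigma> - g \<sigma>) = Eperm n f - Eperm n g"
  by (simp add: Eperm_def sum_subtractf diff_divide_distrib)
lemma Eperm_cmult: "Eperm n (\<lambda>\<sigma>. c * f \<sigma>) = c * Eperm n f"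
  by (simp add: Eperm_def sum_distrib_left)
lemma Eperm_multc: "Eperm n (\<lambda>\<sigma>. f \<sigma> * c) = Eperm n f * c"
  by (simp add: Eperm_def sum_distrib_right)
lemma Eperm_const: "Eperm n (\<lambda>\<sigma>. c) = c"
  by (simp add: Eperm_def card_perms_n)
lemma Eperm_sum: "Eperm n (\<lambda>\<sigma>. \<Sum>k\<in>A. f k \<sigma>) = (\<Sum>k\<in>A. Eperm n (f k))"
  unfolding Eperm_def by (subst sum.swap) (simp add: sum_divide_distrib)

lemma Eperm_ind: "Eperm n (\<lambda>\<sigma>. if P \<sigma> then 1 else 0) = of_nat (card {\<sigma>. \<sigma> permutes {..<n} \<and> P \<sigma>}) / of_nat (fact n)"
proof -
  have fin: "finite {\<sigma>. \<sigma> permutes {..<n::nat}}" using finite_permutations[of "{..<n}"] by simp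
  have "(\<Sum>\<sigma>\<in>{\<sigma>. \<sigma> permutes {..<n}}. (if P \<sigma> then 1 else 0::complex))
        = (\<Sum>\<sigma>\<in>{\<sigma>\<in>{\<sigma>. \<sigma> permutes {..<n}}. P \<sigma>}. 1)"
    using sum.inter_filter[OF fin, of "\<lambda>_. 1::complex" P] by simp
  also have "\<dots> = of_nat (card {\<sigma>. \<sigma> permutes {..<n} \<and> P \<sigma>})" by simp
  finally show ?thesis unfolding Eperm_def by simp
qed

lemma E1: assumes "x < n" "y < n"
  shows "Eperm n (\<lambda>\<sigma>. permmat \<sigma> x y) = 1 / of_nat n"
proof -
  have "Eperm n (\<lambda>\<sigma>. permmat \<sigma> x y) = fact (n - 1) / fact n"
    unfolding permmat_def Eperm_ind using card_perm_one[of "{..<n}" x y] assms by simp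
  also have "(fact n :: complex) = of_nat n * fact (n - 1)" using assms by (simp add: fact_reduce)
  finally show ?thesis using assms by (simp add: field_simps)
qed

lemma aux_div: "(a::complex) \<noteq> 0 \<Longrightarrow> a / (b * (c * a)) = 1 / (b * c)"
  by (metis (no_types, lifting) div_by_0 divide_divide_eq_left' mult.commute nonzero_divide_mult_cancel_right)

lemma E2: assumes "x < n" "y < n" "z < n" "w < n"
  shows "Eperm n (\<lambda>\<sigma>. permmat \<sigma> x y * permmat \<sigma> z w) =
    (if x = z then (if y = w then 1 / of_nat n else 0)
     else if y = w then 0 else 1 / (of_nat n * (of_nat n - 1)))"
proof (cases "x = z")
  case True
  have "Eperm n (\<lambda>\<sigma>. permmat \<sigma> x y * permmat \<sigma> z w) = Eperm n (\<lambda>\<sigma>. if y = w then permmat \<sigma> x y else 0)"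
    unfolding permmat_def using True by (rule_tac arg_cong[where f="Eperm n"]) auto
  then show ?thesis using E1[OF assms(1,2)] True by (auto simp: Eperm_const)
next
  case xz: False
  show ?thesis
  proof (cases "y = w")
    case True
    have "permmat \<sigma> x y * permmat \<sigma> z w = 0" if "\<sigma> permutes {..<n}" for \<sigma>
      using permutes_inj[OF that] xz True unfolding permmat_def inj_def by auto
    hence "Eperm n (\<lambda>\<sigma>. permmat \<sigma> x y * permmat \<sigma> z w) = 0"
      unfolding Eperm_def by (simp add: sum.neutral)
    then show ?thesis using xz True by simp
  next
    case yw: False
    have "Eperm n (\<lambda>\<sigma>. permmat \<sigma> x y * permmat \<sigma> z w) = Eperm n (\<lambda>\<sigma>. if \<sigma> x = y \<and> \<sigma> z = w then 1 else 0)"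
      unfolding permmat_def by (rule arg_cong[where f="Eperm n"]) auto
    also have "\<dots> = fact (n - 2) / fact n"
      unfolding Eperm_ind using card_perm_two[of "{..<n}" x y z w] assms xz yw by simp
    also have "(fact n :: complex) = of_nat n * (of_nat (n - 1) * fact (n - 2))"
    proof -
      have "n \<ge> 2" using assms xz by linarith
      hence "(fact n :: complex) = of_nat n * fact (n - 1)" "(fact (n-1) :: complex) = of_nat (n-1) * fact (n - 1 - 1)"
        by (simp_all add: fact_reduce)
      thus ?thesis by (simp add: numeral_2_eq_2)
    qed
    finally have "Eperm n (\<lambda>\<sigma>. permmat \<sigma> x y * permmat \<sigma> z w) = fact (n - 2) / (of_nat n * (of_nat (n - 1) * fact (n - 2)))" .
    also have "\<dots> = 1 / (of_nat n * of_nat (n - 1))"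
      using aux_div[of "fact (n - 2)"] by simp
    finally have "Eperm n (\<lambda>\<sigma>. permmat \<sigma> x y * permmat \<sigma> z w) = 1 / (of_nat n * of_nat (n - 1))" .
    moreover have "of_nat (n - 1) = (of_nat n - 1 :: complex)" using assms by (simp add: of_nat_diff)
    ultimately show ?thesis using xz yw by simp
  qed
qed


definition al :: "nat \<Rightarrow> complex" where "al n = 1 / (of_nat n - 1)"
definition be :: "nat \<Rightarrow> complex" where "be n = 1 / (of_nat n * (of_nat n - 1))"
definition ga :: "nat \<Rightarrow> complex" where "ga n = 1 / (of_nat n ^ 2 * (of_nat n - 1))"

lemma fa: assumes h1: "(N::complex) \<noteq> 0" and h2: "N - 1 \<noteq> 0" shows "1/N - 1/N^2 = 1/(N-1) - 1/(N*(N-1)) - 1/(N*(N-1)) + 1/(N^2*(N-1))"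
proof -
  have e: "1/(N-1) - 1/(N*(N-1)) - 1/(N*(N-1)) + 1/(N^2*(N-1)) = (N^2 - 2*N + 1)/(N^2*(N-1))"
    using h1 h2 by (simp add: divide_simps power2_eq_square) (simp add: algebra_simps)
  have "N^2 - 2*N + 1 = (N-1)*(N-1)" by (simp add: algebra_simps power2_eq_square)
  hence "(N^2 - 2*N + 1)/(N^2*(N-1)) = (N-1)/N^2" using h2 by (simp add: power2_eq_square)
  also have "\<dots> = 1/N - 1/N^2" using h1 by (simp add: divide_simps power2_eq_square)
  finally show ?thesis using e by simp
qed
lemma fb: assumes h1: "(N::complex) \<noteq> 0" and h2: "N - 1 \<noteq> 0" shows "0 - 1/N^2 = 0 - 1/(N*(N-1)) - 0 + 1/(N^2*(N-1))"
proof -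
  have "- 1/(N*(N-1)) + 1/(N^2*(N-1)) = (1 - N)/(N^2*(N-1))"
    using h1 h2 by (simp add: divide_simps power2_eq_square)
  also have "\<dots> = -1/N^2" using h2 by (simp add: power2_eq_square divide_simps)
  finally show ?thesis by simp
qed
lemma fc: assumes h1: "(N::complex) \<noteq> 0" and h2: "N - 1 \<noteq> 0" shows "1/(N*(N-1)) - 1/N^2 = 0 - 0 - 0 + 1/(N^2*(N-1))"
proof -
  have "1/(N*(N-1)) - 1/N^2 = (N - (N - 1))/(N^2*(N-1))"
    using h1 h2 by (simp add: divide_simps power2_eq_square)
  thus ?thesis by simp
qed

lemma EQQ: assumes "x < n" "y < n" "z < n" "w < n"
  shows "Eperm n (\<lambda>\<sigma>. cpermmat n \<sigma> x y * cpermmat n \<sigma> z w) =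
    (if x = z \<and> y = w then al n else 0) - (if x = z then be n else 0) - (if y = w then be n else 0) + ga n"
proof -
  define c :: complex where "c = 1 / of_nat n"
  have "Eperm n (\<lambda>\<sigma>. cpermmat n \<sigma> x y * cpermmat n \<sigma> z w) =
     Eperm n (\<lambda>\<sigma>. permmat \<sigma> x y * permmat \<sigma> z w - (c * permmat \<sigma> x y + c * permmat \<sigma> z w) + c * c)"
    unfolding cpermmat_def c_def by (rule arg_cong[where f="Eperm n"]) (auto simp: algebra_simps)
  also have "\<dots> = Eperm n (\<lambda>\<sigma>. permmat \<sigma> x y * permmat \<sigma> z w) - (c * (1 / of_nat n) + c * (1 / of_nat n)) + c * c"
    by (simp add: Eperm_add Eperm_diff Eperm_cmult Eperm_const E1 assms)
  also have "\<dots> = Eperm n (\<lambda>\<sigma>. permmat \<sigma> x y * permmat \<sigma> z w) - 1 / (of_nat n)^2"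
    unfolding c_def by (simp add: power2_eq_square field_simps)
  finally have eq: "Eperm n (\<lambda>\<sigma>. cpermmat n \<sigma> x y * cpermmat n \<sigma> z w) =
     Eperm n (\<lambda>\<sigma>. permmat \<sigma> x y * permmat \<sigma> z w) - 1 / (of_nat n)^2" .
  show ?thesis
  proof (cases "n = 1")
    case True
    hence "x = z" "y = w" using assms by auto
    then show ?thesis unfolding eq using True assms
      by (simp add: E2 al_def be_def ga_def)
  next
    case False
    hence n2: "n \<ge> 2" using assms by linarith
    hence nz: "(of_nat n - 1 :: complex) \<noteq> 0" "(of_nat n :: complex) \<noteq> 0"
      by (metis of_nat_1 of_nat_eq_iff right_minus_eq Suc_1 not_less_eq_eq order_refl, simp)
    note a = fa[OF nz(2,1)] and b = fb[OF nz(2,1)] and c = fc[OF nz(2,1)]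
    show ?thesis unfolding eq E2[OF assms] al_def be_def ga_def
      using a b c by (cases "x = z"; cases "y = w") simp_all
  qed
qed


lemma D1:
  fixes h :: "nat \<Rightarrow> nat \<Rightarrow> nat \<Rightarrow> complex"
  assumes "a < n"
  shows "(\<Sum>k<n. \<Sum>w<n. \<Sum>y<n. if a = k \<and> y = w then h k w y else 0) = (\<Sum>y<n. h a y y)"
proof -
  have "(\<Sum>w<n. \<Sum>y<n. if a = k \<and> y = w then h k w y else 0) = (if a = k then (\<Sum>w<n. h k w w) else 0)" for k
    by (cases "a = k") (simp_all add: sum.delta')
  hence "(\<Sum>k<n. \<Sum>w<n. \<Sum>y<n. if a = k \<and> y = w then h k w y else 0) = (\<Sum>k<n. if a = k then (\<Sum>w<n. h k w w) else 0)"
    by simp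
  also have "\<dots> = (\<Sum>y<n. h a y y)" using assms by (simp add: sum.delta)
  finally show ?thesis .
qed

lemma D2:
  fixes h :: "nat \<Rightarrow> nat \<Rightarrow> nat \<Rightarrow> complex"
  assumes "a < n"
  shows "(\<Sum>k<n. \<Sum>w<n. \<Sum>y<n. if a = k then h k w y else 0) = (\<Sum>w<n. \<Sum>y<n. h a w y)"
proof -
  have "(\<Sum>w<n. \<Sum>y<n. if a = k then h k w y else 0) = (if a = k then (\<Sum>w<n. \<Sum>y<n. h k w y) else 0)" for k
    by (cases "a = k") simp_all
  thus ?thesis using assms by (simp add: sum.delta)
qed

lemma D3:
  fixes h :: "nat \<Rightarrow> nat \<Rightarrow> nat \<Rightarrow> complex"
  shows "(\<Sum>k<n. \<Sum>w<n. \<Sum>y<n. if y = w then h k w y else 0) = (\<Sum>k<n. \<Sum>w<n. h k w w)"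
  by (simp add: sum.delta')

lemma T3a:
  fixes F :: "nat \<Rightarrow> nat \<Rightarrow> nat \<Rightarrow> complex"
  assumes "a < n"
  shows "(\<Sum>k<n. \<Sum>w<n. \<Sum>y<n. ((if a = k \<and> y = w then A else 0) - (if a = k then B else 0) - (if y = w then B else 0) + G) * F k w y)
   = A * (\<Sum>y<n. F a y y) - B * (\<Sum>w<n. \<Sum>y<n. F a w y) - B * (\<Sum>k<n. \<Sum>w<n. F k w w) + G * (\<Sum>k<n. \<Sum>w<n. \<Sum>y<n. F k w y)"
proof -
  have pt: "((if a = k \<and> y = w then A else 0) - (if a = k then B else 0) - (if y = w then B else 0) + G) * F k w y
     = (if a = k \<and> y = w then A * F k w y else 0) - (if a = k then B * F k w y else 0) - (if y = w then B * F k w y else 0) + G * F k w y" for k w y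
    by (cases "a = k"; cases "y = w") (simp_all add: algebra_simps)
  show ?thesis
    unfolding pt sum.distrib sum_subtractf D1[OF assms] D2[OF assms] D3
    by (simp add: sum_distrib_left)
qed


lemma split2: fixes n :: nat and f :: "nat \<Rightarrow> 'a::comm_monoid_add" shows "(\<Sum>k<2*n. f k) = (\<Sum>k<n. f k) + (\<Sum>k<n. f (n + k))"
proof -
  have "(\<Sum>k<2*n. f k) = sum f {0..<n} + sum f {n..<2*n}"
    using sum.atLeastLessThan_concat[of 0 n "2*n" f] by (simp add: atLeast0LessThan)
  also have "sum f {n..<2*n} = sum f {0+n..<n+n}" by (simp add: mult_2)
  also have "\<dots> = (\<Sum>k<n. f (n + k))" by (subst sum.shift_bounds_nat_ivl) (simp add: atLeast0LessThan add.commute)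
  finally show ?thesis by (simp add: atLeast0LessThan)
qed

lemma cnj_cperm: "cnj (cpermmat n \<sigma> a b) = cpermmat n \<sigma> a b"
  by (simp add: cpermmat_def permmat_def)

lemma row_lo: "i < n \<Longrightarrow> (\<Sum>m<2*n. blockP n \<sigma> i m * f m) = (\<Sum>y<n. cpermmat n \<sigma> i y * f (n + y))"
  by (simp add: split2 blockP_def)
lemma row_hi: "i < n \<Longrightarrow> (\<Sum>m<2*n. blockP n \<sigma> (n + i) m * f m) = (\<Sum>x<n. cpermmat n \<sigma> x i * f x)"
  by (simp add: split2 blockP_def cnj_cperm)
lemma col_lo: "k < n \<Longrightarrow> (\<Sum>l<2*n. g l * blockP n \<sigma> l k) = (\<Sum>y<n. g (n + y) * cpermmat n \<sigma> k y)"
  by (simp add: split2 blockP_def cnj_cperm)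
lemma col_hi: "k < n \<Longrightarrow> (\<Sum>l<2*n. g l * blockP n \<sigma> l (n + k)) = (\<Sum>x<n. g x * cpermmat n \<sigma> x k)"
  by (simp add: split2 blockP_def)

lemma EXP_lo:
  fixes \<sigma> :: "nat \<Rightarrow> nat" and M :: "nat \<Rightarrow> nat \<Rightarrow> complex"
  assumes iA: "i < n"
  defines "Q \<equiv> cpermmat n \<sigma>"
  shows "PMPM n M \<sigma> i s =
    (\<Sum>k<n. \<Sum>w<n. \<Sum>y<n. (Q i y * Q k w) * (M (n+y) (n+w) * M k s)) +
    (\<Sum>k<n. \<Sum>w<n. \<Sum>y<n. (Q i y * Q k w) * (M (n+y) k * M (n+w) s))"
proof -
  have PM: "mmul (2*n) (blockP n \<sigma>) M i l = (\<Sum>y<n. Q i y * M (n+y) l)" for l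
    unfolding mmul_def Q_def using row_lo[OF iA] .
  have PMP1: "mmul (2*n) (mmul (2*n) (blockP n \<sigma>) M) (blockP n \<sigma>) i k = (\<Sum>w<n. (\<Sum>y<n. Q i y * M (n+y) (n+w)) * Q k w)" if "k < n" for k
    unfolding mmul_def[of "2*n" "mmul (2*n) (blockP n \<sigma>) M"] col_lo[OF that]
    using PM unfolding mmul_def Q_def by simp
  have PMP2: "mmul (2*n) (mmul (2*n) (blockP n \<sigma>) M) (blockP n \<sigma>) i (n+w) = (\<Sum>k<n. (\<Sum>y<n. Q i y * M (n+y) k) * Q k w)" if "w < n" for w
    unfolding mmul_def[of "2*n" "mmul (2*n) (blockP n \<sigma>) M"] col_hi[OF that]
    using PM unfolding mmul_def Q_def by simp
  have "PMPM n M \<sigma> i s = (\<Sum>k<n. (\<Sum>w<n. (\<Sum>y<n. Q i y * M (n+y) (n+w)) * Q k w) * M k s)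
      + (\<Sum>w<n. (\<Sum>k<n. (\<Sum>y<n. Q i y * M (n+y) k) * Q k w) * M (n+w) s)"
    unfolding PMPM_def mmul_def[where A="mmul (2*n) (mmul (2*n) (blockP n \<sigma>) M) (blockP n \<sigma>)"] split2
    by (intro arg_cong2[where f="(+)"] sum.cong refl) (simp_all add: PMP1 PMP2)
  also have "\<dots> = (\<Sum>k<n. \<Sum>w<n. \<Sum>y<n. (Q i y * Q k w) * (M (n+y) (n+w) * M k s)) +
    (\<Sum>w<n. \<Sum>k<n. \<Sum>y<n. (Q i y * Q k w) * (M (n+y) k * M (n+w) s))"
    by (simp only: sum_distrib_left sum_distrib_right) (simp add: mult_ac)
  also have "(\<Sum>w<n. \<Sum>k<n. \<Sum>y<n. (Q i y * Q k w) * (M (n+y) k * M (n+w) s)) =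
     (\<Sum>k<n. \<Sum>w<n. \<Sum>y<n. (Q i y * Q k w) * (M (n+y) k * M (n+w) s))"
    by (rule sum.swap)
  finally show ?thesis .
qed

lemma EXP_hi:
  fixes \<sigma> :: "nat \<Rightarrow> nat" and M :: "nat \<Rightarrow> nat \<Rightarrow> complex"
  assumes iA: "i < n"
  defines "Q \<equiv> cpermmat n \<sigma>"
  shows "PMPM n M \<sigma> (n+i) s =
    (\<Sum>w<n. \<Sum>k<n. \<Sum>x<n. (Q x i * Q k w) * (M x (n+w) * M k s)) +
    (\<Sum>k<n. \<Sum>x'<n. \<Sum>x<n. (Q x i * Q x' k) * (M x x' * M (n+k) s))"
proof -
  have PM: "mmul (2*n) (blockP n \<sigma>) M (n+i) l = (\<Sum>x<n. Q x i * M x l)" for l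
    unfolding mmul_def Q_def using row_hi[OF iA] .
  have PMP1: "mmul (2*n) (mmul (2*n) (blockP n \<sigma>) M) (blockP n \<sigma>) (n+i) k = (\<Sum>w<n. (\<Sum>x<n. Q x i * M x (n+w)) * Q k w)" if "k < n" for k
    unfolding mmul_def[of "2*n" "mmul (2*n) (blockP n \<sigma>) M"] col_lo[OF that]
    using PM unfolding mmul_def Q_def by simp
  have PMP2: "mmul (2*n) (mmul (2*n) (blockP n \<sigma>) M) (blockP n \<sigma>) (n+i) (n+k) = (\<Sum>x'<n. (\<Sum>x<n. Q x i * M x x') * Q x' k)" if "k < n" for k
    unfolding mmul_def[of "2*n" "mmul (2*n) (blockP n \<sigma>) M"] col_hi[OF that]
    using PM unfolding mmul_def Q_def by simp
  have "PMPM n M \<sigma> (n+i) s = (\<Sum>k<n. (\<Sum>w<n. (\<Sum>x<n. Q x i * M x (n+w)) * Q k w) * M k s)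
      + (\<Sum>k<n. (\<Sum>x'<n. (\<Sum>x<n. Q x i * M x x') * Q x' k) * M (n+k) s)"
    unfolding PMPM_def mmul_def[where A="mmul (2*n) (mmul (2*n) (blockP n \<sigma>) M) (blockP n \<sigma>)"] split2
    by (intro arg_cong2[where f="(+)"] sum.cong refl) (simp_all add: PMP1 PMP2)
  also have "\<dots> = (\<Sum>k<n. \<Sum>w<n. \<Sum>x<n. (Q x i * Q k w) * (M x (n+w) * M k s)) +
    (\<Sum>k<n. \<Sum>x'<n. \<Sum>x<n. (Q x i * Q x' k) * (M x x' * M (n+k) s))"
    by (simp only: sum_distrib_left sum_distrib_right) (simp add: mult_ac)
  also have "(\<Sum>k<n. \<Sum>w<n. \<Sum>x<n. (Q x i * Q k w) * (M x (n+w) * M k s)) =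
     (\<Sum>w<n. \<Sum>k<n. \<Sum>x<n. (Q x i * Q k w) * (M x (n+w) * M k s))"
    by (rule sum.swap)
  finally show ?thesis .
qed


lemma CS_cmod: "cmod (\<Sum>c\<in>C. U c * W c) \<le> sqrt (\<Sum>c\<in>C. (cmod (U c))\<^sup>2) * sqrt (\<Sum>c\<in>C. (cmod (W c))\<^sup>2)"
proof -
  have "cmod (\<Sum>c\<in>C. U c * W c) \<le> (\<Sum>c\<in>C. cmod (U c) * cmod (W c))"
    by (rule order_trans[OF norm_sum]) (simp add: norm_mult)
  also have "\<dots> \<le> sqrt ((\<Sum>c\<in>C. (cmod (U c))\<^sup>2) * (\<Sum>c\<in>C. (cmod (W c))\<^sup>2))"
    by (rule real_le_rsqrt) (rule Cauchy_Schwarz_ineq_sum)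
  also have "\<dots> = sqrt (\<Sum>c\<in>C. (cmod (U c))\<^sup>2) * sqrt (\<Sum>c\<in>C. (cmod (W c))\<^sup>2)"
    by (simp add: real_sqrt_mult)
  finally show ?thesis .
qed

lemma vnorm_scale: "vnorm m (\<lambda>a. x * f a) = cmod x * vnorm m f"
proof -
  have "(\<Sum>i<m. (cmod (x * f i))\<^sup>2) = (cmod x)\<^sup>2 * (\<Sum>i<m. (cmod (f i))\<^sup>2)"
    by (simp add: norm_mult power_mult_distrib sum_distrib_left)
  thus ?thesis unfolding vnorm_def by (simp add: real_sqrt_mult)
qed

lemma vnorm_nonneg: "0 \<le> vnorm m v" unfolding vnorm_def by (simp add: sum_nonneg)

lemma vnorm_zero_iff: "vnorm m v = 0 \<Longrightarrow> b < m \<Longrightarrow> v b = 0"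
proof -
  assume a: "vnorm m v = 0" "b < m"
  have "(\<Sum>i<m. (cmod (v i))\<^sup>2) = 0" using a(1) unfolding vnorm_def by simp
  hence "\<forall>i\<in>{..<m}. (cmod (v i))\<^sup>2 = 0" by (subst sum_nonneg_eq_0_iff[symmetric]) auto
  thus ?thesis using a(2) by simp
qed

lemma entry_le_vnorm: "vnorm m v \<le> 1 \<Longrightarrow> b < m \<Longrightarrow> cmod (v b) \<le> 1"
proof -
  assume a: "vnorm m v \<le> 1" "b < m"
  have "(cmod (v b))\<^sup>2 \<le> (\<Sum>i<m. (cmod (v i))\<^sup>2)"
    using a(2) by (intro member_le_sum) auto
  also have "\<dots> \<le> 1" using a(1) unfolding vnorm_def
    by (metis real_sqrt_le_1_iff)
  finally show ?thesis by (simp add: power_le_one_iff abs_le_square_iff)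
qed

lemma opnorm_bdd: "bdd_above {vnorm m (\<lambda>a. \<Sum>b<m. M a b * v b) | v. vnorm m v \<le> 1}"
proof (rule bdd_aboveI)
  fix x assume "x \<in> {vnorm m (\<lambda>a. \<Sum>b<m. M a b * v b) | v. vnorm m v \<le> 1}"
  then obtain v where v: "vnorm m v \<le> 1" and x: "x = vnorm m (\<lambda>a. \<Sum>b<m. M a b * v b)" by auto
  have "cmod (\<Sum>b<m. M a b * v b) \<le> (\<Sum>b<m. cmod (M a b))" for a
  proof -
    have "cmod (\<Sum>b<m. M a b * v b) \<le> (\<Sum>b<m. cmod (M a b * v b))" by (rule norm_sum)
    also have "\<dots> \<le> (\<Sum>b<m. cmod (M a b))"
      using entry_le_vnorm[OF v] by (intro sum_mono) (simp add: norm_mult mult_left_le)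
    finally show ?thesis .
  qed
  hence "(\<Sum>a<m. (cmod (\<Sum>b<m. M a b * v b))\<^sup>2) \<le> (\<Sum>a<m. (\<Sum>b<m. cmod (M a b))\<^sup>2)"
    by (intro sum_mono power_mono) auto
  thus "x \<le> sqrt (\<Sum>a<m. (\<Sum>b<m. cmod (M a b))\<^sup>2)" unfolding x vnorm_def by simp
qed

lemma opnorm_nonneg: "0 \<le> opnorm m M"
proof -
  have "vnorm m (\<lambda>a. \<Sum>b<m. M a b * (\<lambda>_. 0) b) \<in> {vnorm m (\<lambda>a. \<Sum>b<m. M a b * v b) | v. vnorm m v \<le> 1}"
    by (rule CollectI, rule exI[of _ "\<lambda>_. 0"]) (simp add: vnorm_def)
  hence "vnorm m (\<lambda>a. \<Sum>b<m. M a b * (\<lambda>_. 0) b) \<le> opnorm m M"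
    unfolding opnorm_def by (rule cSup_upper[OF _ opnorm_bdd])
  thus ?thesis by (simp add: vnorm_def)
qed

lemma opnorm_bound: "vnorm m (\<lambda>a. \<Sum>b<m. M a b * v b) \<le> opnorm m M * vnorm m v"
proof (cases "vnorm m v = 0")
  case True
  hence "(\<lambda>a. \<Sum>b<m. M a b * v b) = (\<lambda>a. 0)" using vnorm_zero_iff[OF True] by (auto intro!: sum.neutral)
  thus ?thesis using True by (simp add: vnorm_def)
next
  case False
  define c where "c = vnorm m v"
  have c: "c > 0" using False vnorm_nonneg[of m v] unfolding c_def by linarith
  define v' where "v' = (\<lambda>b. complex_of_real (1/c) * v b)"
  have "vnorm m v' = 1" unfolding v'_def vnorm_scale using c unfolding c_def by (simp add: norm_divide)
  hence "vnorm m (\<lambda>a. \<Sum>b<m. M a b * v' b) \<in> {vnorm m (\<lambda>a. \<Sum>b<m. M a b * v b) | v. vnorm m v \<le> 1}"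
    by auto
  hence le: "vnorm m (\<lambda>a. \<Sum>b<m. M a b * v' b) \<le> opnorm m M"
    unfolding opnorm_def by (rule cSup_upper[OF _ opnorm_bdd])
  have "(\<lambda>a. \<Sum>b<m. M a b * v' b) = (\<lambda>a. complex_of_real (1/c) * (\<Sum>b<m. M a b * v b))"
    unfolding v'_def by (simp add: sum_distrib_left mult_ac)
  hence "vnorm m (\<lambda>a. \<Sum>b<m. M a b * v' b) = cmod (complex_of_real (1/c)) * vnorm m (\<lambda>a. \<Sum>b<m. M a b * v b)"
    by (simp only: vnorm_scale)
  hence "vnorm m (\<lambda>a. \<Sum>b<m. M a b * v' b) = (1/c) * vnorm m (\<lambda>a. \<Sum>b<m. M a b * v b)"
    using c by (simp add: norm_divide)
  hence e: "vnorm m (\<lambda>a. \<Sum>b<m. M a b * v b) = c * vnorm m (\<lambda>a. \<Sum>b<m. M a b * v' b)"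
    using c by simp
  have "c * vnorm m (\<lambda>a. \<Sum>b<m. M a b * v' b) \<le> c * opnorm m M"
    using mult_left_mono[OF le] c by simp
  thus ?thesis unfolding e c_def by (simp add: mult.commute)
qed

lemma bil_full: "cmod (\<Sum>a<m. u a * (\<Sum>b<m. M a b * v b)) \<le> opnorm m M * vnorm m u * vnorm m v"
proof -
  have "cmod (\<Sum>a<m. u a * (\<Sum>b<m. M a b * v b)) \<le> vnorm m u * vnorm m (\<lambda>a. \<Sum>b<m. M a b * v b)"
    unfolding vnorm_def by (rule CS_cmod)
  also have "\<dots> \<le> vnorm m u * (opnorm m M * vnorm m v)"
    by (rule mult_left_mono[OF opnorm_bound vnorm_nonneg])
  finally show ?thesis by (simp add: mult_ac)
qed

definition extf :: "(nat \<Rightarrow> nat) \<Rightarrow> nat set \<Rightarrow> (nat \<Rightarrow> 'a::zero) \<Rightarrow> nat \<Rightarrow> 'a" where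
  "extf g B v c = (if c \<in> g ` B then v (the_inv_into B g c) else 0)"

lemma sum_ext:
  fixes \<phi> :: "nat \<Rightarrow> nat \<Rightarrow> 'a::comm_monoid_add"
  assumes "inj_on g B" "g ` B \<subseteq> C" "finite C"
  shows "(\<Sum>c\<in>C. if c \<in> g ` B then \<phi> c (the_inv_into B g c) else 0) = (\<Sum>b\<in>B. \<phi> (g b) b)"
proof -
  have "(\<Sum>c\<in>C. if c \<in> g ` B then \<phi> c (the_inv_into B g c) else 0) = (\<Sum>c\<in>g ` B. \<phi> c (the_inv_into B g c))"
    using assms by (intro sum.mono_neutral_cong_right) auto
  also have "\<dots> = (\<Sum>b\<in>B. \<phi> (g b) (the_inv_into B g (g b)))"
    using assms(1) by (rule sum.reindex[unfolded comp_def])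
  also have "\<dots> = (\<Sum>b\<in>B. \<phi> (g b) b)"
    using assms(1) by (intro sum.cong refl) (simp add: the_inv_into_f_f)
  finally show ?thesis .
qed


lemma BL:
  fixes M :: "nat \<Rightarrow> nat \<Rightarrow> complex" and u v :: "nat \<Rightarrow> complex" and f g :: "nat \<Rightarrow> nat"
  assumes f: "inj_on f {..<p}" "f ` {..<p} \<subseteq> {..<m}" and g: "inj_on g {..<q}" "g ` {..<q} \<subseteq> {..<m}"
  shows "cmod (\<Sum>a<p. \<Sum>b<q. u a * M (f a) (g b) * v b)
     \<le> opnorm m M * sqrt (\<Sum>a<p. (cmod (u a))\<^sup>2) * sqrt (\<Sum>b<q. (cmod (v b))\<^sup>2)"
proof -
  define U where "U = extf f {..<p} u"
  define V where "V = extf g {..<q} v"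
  have MV: "(\<Sum>c<m. M r c * V c) = (\<Sum>b<q. M r (g b) * v b)" for r
  proof -
    have "(\<Sum>c<m. M r c * V c) = (\<Sum>c<m. if c \<in> g ` {..<q} then M r c * v (the_inv_into {..<q} g c) else 0)"
      unfolding V_def extf_def by (intro sum.cong) auto
    also have "\<dots> = (\<Sum>b<q. M r (g b) * v b)"
      by (rule sum_ext[OF g, where \<phi>="\<lambda>c b. M r c * v b"]) simp
    finally show ?thesis .
  qed
  have UW: "(\<Sum>c<m. U c * W c) = (\<Sum>a<p. u a * W (f a))" for W :: "nat \<Rightarrow> complex"
  proof -
    have "(\<Sum>c<m. U c * W c) = (\<Sum>c<m. if c \<in> f ` {..<p} then u (the_inv_into {..<p} f c) * W c else 0)"
      unfolding U_def extf_def by (intro sum.cong) auto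
    also have "\<dots> = (\<Sum>a<p. u a * W (f a))"
      by (rule sum_ext[OF f, where \<phi>="\<lambda>c a. u a * W c"]) simp
    finally show ?thesis .
  qed
  have nU: "vnorm m U = sqrt (\<Sum>a<p. (cmod (u a))\<^sup>2)"
  proof -
    have "(\<Sum>c<m. (cmod (U c))\<^sup>2) = (\<Sum>c<m. if c \<in> f ` {..<p} then (cmod (u (the_inv_into {..<p} f c)))\<^sup>2 else 0)"
      unfolding U_def extf_def by (intro sum.cong) auto
    also have "\<dots> = (\<Sum>a<p. (cmod (u a))\<^sup>2)"
      by (rule sum_ext[OF f, where \<phi>="\<lambda>c a. (cmod (u a))\<^sup>2"]) simp
    finally show ?thesis unfolding vnorm_def by simp
  qed
  have nV: "vnorm m V = sqrt (\<Sum>b<q. (cmod (v b))\<^sup>2)"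
  proof -
    have "(\<Sum>c<m. (cmod (V c))\<^sup>2) = (\<Sum>c<m. if c \<in> g ` {..<q} then (cmod (v (the_inv_into {..<q} g c)))\<^sup>2 else 0)"
      unfolding V_def extf_def by (intro sum.cong) auto
    also have "\<dots> = (\<Sum>b<q. (cmod (v b))\<^sup>2)"
      by (rule sum_ext[OF g, where \<phi>="\<lambda>c b. (cmod (v b))\<^sup>2"]) simp
    finally show ?thesis unfolding vnorm_def by simp
  qed
  have "(\<Sum>a<p. \<Sum>b<q. u a * M (f a) (g b) * v b) = (\<Sum>a<p. u a * (\<Sum>b<q. M (f a) (g b) * v b))"
    by (simp add: sum_distrib_left mult_ac)
  also have "\<dots> = (\<Sum>c<m. U c * (\<Sum>d<m. M c d * V d))"
    unfolding UW MV ..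
  finally have eq: "(\<Sum>a<p. \<Sum>b<q. u a * M (f a) (g b) * v b) = (\<Sum>c<m. U c * (\<Sum>d<m. M c d * V d))" .
  show ?thesis unfolding eq nU[symmetric] nV[symmetric] by (rule bil_full)
qed


lemma inj_shift: "inj_on (\<lambda>a. (c::nat) + a) A" by (simp add: inj_on_def)
lemma img_shift: "(c::nat) \<le> n \<Longrightarrow> (\<lambda>a. c + a) ` {..<n} \<subseteq> {..<2*n}" by auto
lemma inj_const: "inj_on (\<lambda>_. c) {..<Suc 0}" by (simp add: inj_on_def)
lemma img_const: "(c::nat) < m \<Longrightarrow> (\<lambda>_. c) ` {..<Suc 0} \<subseteq> {..<m}" by auto

lemma F_entry: assumes "a < m" "b < m" shows "cmod (M a b) \<le> opnorm m M"
  using BL[OF inj_const img_const[OF assms(1)] inj_const img_const[OF assms(2)], of "\<lambda>_. 1" M "\<lambda>_. 1"]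
  by simp

lemma F_col: assumes "c \<le> n" "s < 2*n" shows "cmod (\<Sum>y<n. M (c+y) s) \<le> opnorm (2*n) M * sqrt n"
  using BL[OF inj_shift img_shift[OF assms(1)] inj_const img_const[OF assms(2)], of "\<lambda>_. 1" M "\<lambda>_. 1"]
  by simp

lemma F_blk: assumes "c \<le> n" "d \<le> n" shows "cmod (\<Sum>y<n. \<Sum>w<n. M (c+y) (d+w)) \<le> opnorm (2*n) M * n"
proof -
  have "cmod (\<Sum>y<n. \<Sum>w<n. M (c+y) (d+w)) \<le> opnorm (2*n) M * sqrt n * sqrt n"
    using BL[OF inj_shift img_shift[OF assms(1)] inj_shift img_shift[OF assms(2)], of "\<lambda>_. 1" M "\<lambda>_. 1"]
    by simp
  also have "\<dots> = opnorm (2*n) M * n" by (simp add: mult.assoc)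
  finally show ?thesis .
qed

lemma F_tr: assumes "c \<le> n" "d \<le> n" shows "cmod (\<Sum>y<n. M (c+y) (d+y)) \<le> n * opnorm (2*n) M"
proof -
  have "cmod (\<Sum>y<n. M (c+y) (d+y)) \<le> (\<Sum>y<n. cmod (M (c+y) (d+y)))" by (rule norm_sum)
  also have "\<dots> \<le> (\<Sum>y<n. opnorm (2*n) M)"
    using assms by (intro sum_mono F_entry) auto
  finally show ?thesis by simp
qed

lemma F_en0: assumes "c \<le> n" "s < 2*n" shows "(\<Sum>y<n. (cmod (M (c+y) s))\<^sup>2) \<le> (opnorm (2*n) M)\<^sup>2"
proof -
  define t where "t = (\<Sum>y<n. (cmod (M (c+y) s))\<^sup>2)"
  have t0: "t \<ge> 0" unfolding t_def by (simp add: sum_nonneg)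
  have "cmod (\<Sum>y<n. cnj (M (c+y) s) * M (c+y) s) \<le> opnorm (2*n) M * sqrt t"
    using BL[OF inj_shift img_shift[OF assms(1)] inj_const img_const[OF assms(2)], of "\<lambda>y. cnj (M (c+y) s)" M "\<lambda>_. 1"]
    unfolding t_def by simp
  moreover have "(\<Sum>y<n. cnj (M (c+y) s) * M (c+y) s) = complex_of_real t"
  proof -
    have "(\<Sum>y<n. cnj (M (c+y) s) * M (c+y) s) = (\<Sum>y<n. complex_of_real ((cmod (M (c+y) s))\<^sup>2))"
      by (intro sum.cong refl) (metis complex_norm_square mult.commute)
    thus ?thesis unfolding t_def by simp
  qed
  ultimately have le: "t \<le> opnorm (2*n) M * sqrt t" using t0 by simp
  show ?thesis
  proof (cases "t = 0")
    case True thus ?thesis unfolding t_def[symmetric] by simp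
  next
    case False
    hence "sqrt t > 0" using t0 by simp
    moreover have "sqrt t * sqrt t \<le> opnorm (2*n) M * sqrt t" using le t0 by simp
    ultimately have "sqrt t \<le> opnorm (2*n) M" by (meson mult_le_cancel_right_pos)
    hence "(sqrt t)\<^sup>2 \<le> (opnorm (2*n) M)\<^sup>2" by (rule power_mono) (simp add: t0)
    thus ?thesis using t0 unfolding t_def[symmetric] by simp
  qed
qed

lemma sqrt_en: assumes "c \<le> n" "s < 2*n" shows "sqrt (\<Sum>y<n. (cmod (M (c+y) s))\<^sup>2) \<le> opnorm (2*n) M"
  using real_sqrt_le_mono[OF F_en0[OF assms, of M]] opnorm_nonneg[of "2*n" M] by simp

lemma F_en: assumes "c \<le> n" "s < 2*n" "t < 2*n"
  shows "cmod (\<Sum>y<n. M (c+y) s * M (c+y) t) \<le> (opnorm (2*n) M)\<^sup>2"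
proof -
  have "cmod (\<Sum>y<n. M (c+y) s * M (c+y) t) \<le> opnorm (2*n) M * sqrt (\<Sum>y<n. (cmod (M (c+y) s))\<^sup>2)"
    using BL[OF inj_shift img_shift[OF assms(1)] inj_const img_const[OF assms(3)], of "\<lambda>y. M (c+y) s" M "\<lambda>_. 1"]
    by simp
  also have "\<dots> \<le> opnorm (2*n) M * opnorm (2*n) M"
    by (rule mult_left_mono[OF sqrt_en[OF assms(1,2)] opnorm_nonneg])
  finally show ?thesis by (simp add: power2_eq_square)
qed

lemma F_wt: assumes "c \<le> n" "d \<le> n" "s < 2*n"
  shows "cmod (\<Sum>y<n. \<Sum>w<n. M (c+y) s * M (c+y) (d+w)) \<le> (opnorm (2*n) M)\<^sup>2 * sqrt n"
proof -
  have "cmod (\<Sum>y<n. \<Sum>w<n. M (c+y) s * M (c+y) (d+w)) \<le> opnorm (2*n) M * sqrt (\<Sum>y<n. (cmod (M (c+y) s))\<^sup>2) * sqrt n"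
    using BL[OF inj_shift img_shift[OF assms(1)] inj_shift img_shift[OF assms(2)], of "\<lambda>y. M (c+y) s" M "\<lambda>_. 1"]
    by simp
  also have "\<dots> \<le> opnorm (2*n) M * opnorm (2*n) M * sqrt n"
    by (intro mult_right_mono mult_left_mono sqrt_en assms opnorm_nonneg) simp_all
  finally show ?thesis by (simp add: power2_eq_square)
qed

lemma coef_bounds:
  assumes "n \<ge> 1"
  shows "cmod (al n - 1 / of_nat n) \<le> 2 / real n ^ 2" "cmod (al n) \<le> 2 / real n"
        "cmod (be n) \<le> 2 / real n ^ 2" "cmod (ga n) \<le> 2 / real n ^ 3"
proof -
  have all: "cmod (al n - 1 / of_nat n) \<le> 2 / real n ^ 2 \<and> cmod (al n) \<le> 2 / real n \<and>
        cmod (be n) \<le> 2 / real n ^ 2 \<and> cmod (ga n) \<le> 2 / real n ^ 3"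
  proof (cases "n = 1")
    case True thus ?thesis by (simp add: al_def be_def ga_def)
  next
    case False
    hence n2: "real n \<ge> 2" using assms by linarith
    define N where "N = real n"
    have N: "N \<ge> 2" using n2 N_def by simp
    have a: "al n = complex_of_real (1 / (N - 1))" unfolding al_def N_def by simp
    have b: "be n = complex_of_real (1 / (N * (N - 1)))" unfolding be_def N_def by simp
    have g: "ga n = complex_of_real (1 / (N^2 * (N - 1)))" unfolding ga_def N_def by simp
    have d: "al n - 1 / of_nat n = complex_of_real (1 / (N * (N - 1)))"
      unfolding a N_def using N N_def by (simp add: field_simps)
    have p1: "1 / (N * (N - 1)) \<le> 2 / N^2" using N by (simp add: field_simps power2_eq_square)
    have p2: "1 / (N - 1) \<le> 2 / N" using N by (simp add: field_simps)
    have p3: "1 / (N^2 * (N - 1)) \<le> 2 / N^3" using N by (simp add: field_simps power2_eq_square power3_eq_cube)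
    have pos: "1 / (N * (N - 1)) \<ge> 0" "1 / (N - 1) \<ge> 0" "1 / (N^2 * (N - 1)) \<ge> 0" using N by simp_all
    have "cmod (al n - 1 / of_nat n) \<le> 2 / N ^ 2" unfolding d norm_of_real using p1 pos by simp
    moreover have "cmod (al n) \<le> 2 / N" unfolding a norm_of_real using p2 pos by simp
    moreover have "cmod (be n) \<le> 2 / N ^ 2" unfolding b norm_of_real using p1 pos by simp
    moreover have "cmod (ga n) \<le> 2 / N ^ 3" unfolding g norm_of_real using p3 pos by simp
    ultimately show ?thesis unfolding N_def by simp
  qed
  thus "cmod (al n - 1 / of_nat n) \<le> 2 / real n ^ 2" "cmod (al n) \<le> 2 / real n"
        "cmod (be n) \<le> 2 / real n ^ 2" "cmod (ga n) \<le> 2 / real n ^ 3" by auto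
qed

lemma prod_bound: "cmod x \<le> A \<Longrightarrow> cmod y \<le> B \<Longrightarrow> cmod (x * y) \<le> A * B"
  by (simp add: norm_mult mult_mono')

lemma ABS:
  fixes K :: real and n :: nat
  assumes n: "n \<ge> 1" and K: "K \<ge> 0"
    and T: "cmod T \<le> n * K" and m: "cmod m \<le> K" and Y0: "cmod Y0 \<le> K\<^sup>2"
    and X1: "cmod X1 \<le> n * sqrt n * K\<^sup>2" and X2: "cmod X2 \<le> n * sqrt n * K\<^sup>2"
    and X3: "cmod X3 \<le> n * sqrt n * K\<^sup>2" and X4: "cmod X4 \<le> n * sqrt n * K\<^sup>2"
    and X5: "cmod X5 \<le> n * sqrt n * K\<^sup>2" and X6: "cmod X6 \<le> n * sqrt n * K\<^sup>2"
  shows "cmod ((al n - 1 / of_nat n) * T * m - be n * X1 - be n * X2 + ga n * X3 + al n * Y0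
           - be n * X4 - be n * X5 + ga n * X6) \<le> 16 * K\<^sup>2 / sqrt n"
proof -
  note cb = coef_bounds[OF n]
  define r where "r = sqrt n"
  have r1: "r \<ge> 1" using n unfolding r_def by simp
  have rr: "1 \<le> r * r" using mult_mono[OF r1 r1] r1 by simp
  have nr: "real n = r * r" unfolding r_def by simp
  have K2: "K\<^sup>2 \<ge> 0" by simp
  have t1: "cmod ((al n - 1 / of_nat n) * T * m) \<le> 2 * K\<^sup>2 / r"
  proof -
    have "cmod ((al n - 1 / of_nat n) * T * m) \<le> (2 / real n ^ 2) * (n * K) * K"
      by (intro prod_bound cb T m)
    also have "\<dots> = 2 * K\<^sup>2 / (r * r)" using r1 unfolding nr by (simp add: field_simps power2_eq_square)
    also have "\<dots> \<le> 2 * K\<^sup>2 / r" using r1 K2 by (intro divide_left_mono) (auto simp: mult_le_cancel_left1)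
    finally show ?thesis .
  qed
  have tb: "cmod (be n * X) \<le> 2 * K\<^sup>2 / r" if X: "cmod X \<le> n * sqrt n * K\<^sup>2" for X
  proof -
    have "cmod (be n * X) \<le> (2 / real n ^ 2) * (n * sqrt n * K\<^sup>2)"
      by (intro prod_bound cb X)
    also have "\<dots> = 2 * K\<^sup>2 / r" using r1 unfolding nr r_def[symmetric] by (simp add: field_simps power2_eq_square)
    finally show ?thesis .
  qed
  have tg: "cmod (ga n * X) \<le> 2 * K\<^sup>2 / r" if X: "cmod X \<le> n * sqrt n * K\<^sup>2" for X
  proof -
    have "cmod (ga n * X) \<le> (2 / real n ^ 3) * (n * sqrt n * K\<^sup>2)"
      by (intro prod_bound cb X)
    also have "\<dots> = 2 * K\<^sup>2 / (r * (r * r))" using r1 unfolding nr r_def[symmetric] by (simp add: field_simps power2_eq_square power3_eq_cube)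
    also have "\<dots> \<le> 2 * K\<^sup>2 / r" using r1 K2 by (intro divide_left_mono) (auto simp: mult_le_cancel_left1 rr)
    finally show ?thesis .
  qed
  have ty: "cmod (al n * Y0) \<le> 2 * K\<^sup>2 / r"
  proof -
    have "cmod (al n * Y0) \<le> (2 / real n) * K\<^sup>2" by (intro prod_bound cb Y0)
    also have "\<dots> = 2 * K\<^sup>2 / (r * r)" unfolding nr by simp
    also have "\<dots> \<le> 2 * K\<^sup>2 / r" using r1 K2 by (intro divide_left_mono) (auto simp: mult_le_cancel_left1)
    finally show ?thesis .
  qed
  have "cmod ((al n - 1 / of_nat n) * T * m - be n * X1 - be n * X2 + ga n * X3 + al n * Y0
           - be n * X4 - be n * X5 + ga n * X6)
     \<le> cmod ((al n - 1 / of_nat n) * T * m) + cmod (be n * X1) + cmod (be n * X2) + cmod (ga n * X3) + cmod (al n * Y0)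
           + cmod (be n * X4) + cmod (be n * X5) + cmod (ga n * X6)"
    by (intro order_trans[OF norm_triangle_ineq] order_trans[OF norm_triangle_ineq4] add_mono order_refl)
  also have "\<dots> \<le> 8 * (2 * K\<^sup>2 / r)"
    using t1 tb[OF X1] tb[OF X2] tg[OF X3] ty tb[OF X4] tb[OF X5] tg[OF X6] by linarith
  finally show ?thesis unfolding r_def by simp
qed



lemma EQQ_T: assumes "x < n" "y < n" "z < n" "w < n"
  shows "Eperm n (\<lambda>\<sigma>. cpermmat n \<sigma> x y * cpermmat n \<sigma> z w) =
    (if y = w \<and> x = z then al n else 0) - (if y = w then be n else 0) - (if x = z then be n else 0) + ga n"
  unfolding EQQ[OF assms] by (simp add: conj_commute algebra_simps)

lemma E_lo:
  assumes i: "i < n"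
  shows "Eperm n (\<lambda>\<sigma>. PMPM n M \<sigma> i s) =
   (al n * ((\<Sum>y<n. M (n+y) (n+y)) * M i s) - be n * (\<Sum>w<n. \<Sum>y<n. M (n+y) (n+w) * M i s)
     - be n * (\<Sum>k<n. \<Sum>w<n. M (n+w) (n+w) * M k s) + ga n * (\<Sum>k<n. \<Sum>w<n. \<Sum>y<n. M (n+y) (n+w) * M k s))
   + (al n * (\<Sum>y<n. M (n+y) i * M (n+y) s) - be n * (\<Sum>w<n. \<Sum>y<n. M (n+y) i * M (n+w) s)
     - be n * (\<Sum>k<n. \<Sum>w<n. M (n+w) k * M (n+w) s) + ga n * (\<Sum>k<n. \<Sum>w<n. \<Sum>y<n. M (n+y) k * M (n+w) s))"
proof -
  have "Eperm n (\<lambda>\<sigma>. PMPM n M \<sigma> i s) =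
    (\<Sum>k<n. \<Sum>w<n. \<Sum>y<n. Eperm n (\<lambda>\<sigma>. cpermmat n \<sigma> i y * cpermmat n \<sigma> k w) * (M (n+y) (n+w) * M k s)) +
    (\<Sum>k<n. \<Sum>w<n. \<Sum>y<n. Eperm n (\<lambda>\<sigma>. cpermmat n \<sigma> i y * cpermmat n \<sigma> k w) * (M (n+y) k * M (n+w) s))"
    by (simp only: EXP_lo[OF i] Eperm_add Eperm_sum Eperm_multc)
  also have "\<dots> =
    (\<Sum>k<n. \<Sum>w<n. \<Sum>y<n. ((if i = k \<and> y = w then al n else 0) - (if i = k then be n else 0) - (if y = w then be n else 0) + ga n) * (M (n+y) (n+w) * M k s)) +
    (\<Sum>k<n. \<Sum>w<n. \<Sum>y<n. ((if i = k \<and> y = w then al n else 0) - (if i = k then be n else 0) - (if y = w then be n else 0) + ga n) * (M (n+y) k * M (n+w) s))"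
    using i by (intro arg_cong2[where f="(+)"] sum.cong refl) (simp_all add: EQQ)
  finally show ?thesis
    unfolding T3a[OF i, where F="\<lambda>k w y. M (n+y) (n+w) * M k s"] T3a[OF i, where F="\<lambda>k w y. M (n+y) k * M (n+w) s"]
    by (simp add: sum_distrib_right)
qed

lemma E_hi:
  assumes i: "i < n"
  shows "Eperm n (\<lambda>\<sigma>. PMPM n M \<sigma> (n+i) s) =
   (al n * (\<Sum>x<n. M x (n+i) * M x s) - be n * (\<Sum>k<n. \<Sum>x<n. M x (n+i) * M k s)
     - be n * (\<Sum>w<n. \<Sum>k<n. M k (n+w) * M k s) + ga n * (\<Sum>w<n. \<Sum>k<n. \<Sum>x<n. M x (n+w) * M k s))
   + (al n * ((\<Sum>x<n. M x x) * M (n+i) s) - be n * (\<Sum>x'<n. \<Sum>x<n. M x x' * M (n+i) s)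
     - be n * (\<Sum>k<n. \<Sum>x'<n. M x' x' * M (n+k) s) + ga n * (\<Sum>k<n. \<Sum>x'<n. \<Sum>x<n. M x x' * M (n+k) s))"
proof -
  have "Eperm n (\<lambda>\<sigma>. PMPM n M \<sigma> (n+i) s) =
    (\<Sum>w<n. \<Sum>k<n. \<Sum>x<n. Eperm n (\<lambda>\<sigma>. cpermmat n \<sigma> x i * cpermmat n \<sigma> k w) * (M x (n+w) * M k s)) +
    (\<Sum>k<n. \<Sum>x'<n. \<Sum>x<n. Eperm n (\<lambda>\<sigma>. cpermmat n \<sigma> x i * cpermmat n \<sigma> x' k) * (M x x' * M (n+k) s))"
    by (simp only: EXP_hi[OF i] Eperm_add Eperm_sum Eperm_multc)
  also have "\<dots> =
    (\<Sum>w<n. \<Sum>k<n. \<Sum>x<n. ((if i = w \<and> x = k then al n else 0) - (if i = w then be n else 0) - (if x = k then be n else 0) + ga n) * (M x (n+w) * M k s)) +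
    (\<Sum>k<n. \<Sum>x'<n. \<Sum>x<n. ((if i = k \<and> x = x' then al n else 0) - (if i = k then be n else 0) - (if x = x' then be n else 0) + ga n) * (M x x' * M (n+k) s))"
    using i by (intro arg_cong2[where f="(+)"] sum.cong refl) (simp_all add: EQQ_T)
  finally show ?thesis
    unfolding T3a[OF i, where F="\<lambda>w k x. M x (n+w) * M k s"] T3a[OF i, where F="\<lambda>k x' x. M x x' * M (n+k) s"]
    by (simp add: sum_distrib_right)
qed



lemma TRI: "(\<Sum>k\<in>A. \<Sum>w\<in>B. \<Sum>y\<in>C. (f y w::complex) * g k) = (\<Sum>y\<in>C. \<Sum>w\<in>B. f y w) * (\<Sum>k\<in>A. g k)"
proof -
  have "(\<Sum>y\<in>C. \<Sum>w\<in>B. f y w) * (\<Sum>k\<in>A. g k) = (\<Sum>k\<in>A. (\<Sum>y\<in>C. \<Sum>w\<in>B. f y w) * g k)"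
    by (rule sum_distrib_left)
  also have "\<dots> = (\<Sum>k\<in>A. \<Sum>y\<in>C. \<Sum>w\<in>B. f y w * g k)" by (simp add: sum_distrib_right)
  also have "\<dots> = (\<Sum>k\<in>A. \<Sum>w\<in>B. \<Sum>y\<in>C. f y w * g k)" by (rule sum.cong[OF refl], rule sum.swap)
  finally show ?thesis by simp
qed
lemma PRD: "(\<Sum>w\<in>B. \<Sum>y\<in>C. (f y::complex) * g w) = (\<Sum>y\<in>C. f y) * (\<Sum>w\<in>B. g w)"
proof -
  have "(\<Sum>y\<in>C. f y) * (\<Sum>w\<in>B. g w) = (\<Sum>y\<in>C. \<Sum>w\<in>B. f y * g w)"
    by (rule sum_product)
  also have "\<dots> = (\<Sum>w\<in>B. \<Sum>y\<in>C. f y * g w)" by (rule sum.swap)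
  finally show ?thesis by (rule sym)
qed
lemma TRI2: "(\<Sum>k\<in>A. \<Sum>w\<in>B. \<Sum>y\<in>C. (f y k::complex) * g w) = (\<Sum>y\<in>C. \<Sum>k\<in>A. f y k) * (\<Sum>w\<in>B. g w)"
  by (subst sum.swap) (rule TRI)
lemma TRI3: "(\<Sum>w\<in>B. \<Sum>k\<in>A. \<Sum>y\<in>C. (f y w::complex) * g k) = (\<Sum>y\<in>C. \<Sum>w\<in>B. f y w) * (\<Sum>k\<in>A. g k)"
  by (subst sum.swap) (rule TRI)


lemma RR: fixes K :: real and n :: nat assumes "n \<ge> 1" "K \<ge> 0"
  shows "K * n * K \<le> n * sqrt n * K\<^sup>2" "n * K * (K * sqrt n) \<le> n * sqrt n * K\<^sup>2"
    "K * n * (K * sqrt n) \<le> n * sqrt n * K\<^sup>2" "K * sqrt n * (K * sqrt n) \<le> n * sqrt n * K\<^sup>2"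
    "K\<^sup>2 * sqrt n \<le> n * sqrt n * K\<^sup>2"
proof -
  have s1: "sqrt n \<ge> 1" using assms by simp
  have K2: "K\<^sup>2 \<ge> 0" by simp
  have nn: "real n \<ge> 1" using assms by simp
  have nk: "0 \<le> n * K\<^sup>2" by simp
  show "K * n * K \<le> n * sqrt n * K\<^sup>2"
    using mult_left_mono[OF s1 nk] by (simp add: power2_eq_square mult_ac)
  show "n * K * (K * sqrt n) \<le> n * sqrt n * K\<^sup>2" "K * n * (K * sqrt n) \<le> n * sqrt n * K\<^sup>2"
    by (simp_all add: power2_eq_square mult_ac)
  show "K * sqrt n * (K * sqrt n) \<le> n * sqrt n * K\<^sup>2"
    using mult_left_mono[OF s1 nk] by (simp add: power2_eq_square mult_ac)
  show "K\<^sup>2 * sqrt n \<le> n * sqrt n * K\<^sup>2"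
    using mult_right_mono[OF nn, of "sqrt n * K\<^sup>2"] by (simp add: mult_ac)
qed

lemma ALG_lo: "(E::complex) = (a*(T*m) - b*X1 - b*X2 + g*X3) + (a*Y0 - b*X4 - b*X5 + g*X6) \<Longrightarrow>
   E - m * (T / N) = (a - 1/N)*T*m - b*X1 - b*X2 + g*X3 + a*Y0 - b*X4 - b*X5 + g*X6"
  by (simp add: algebra_simps divide_inverse)
lemma ALG_hi: "(E::complex) = (a*Y0 - b*X4 - b*X5 + g*X6) + (a*(T*m) - b*X1 - b*X2 + g*X3) \<Longrightarrow>
   E - m * (T / N) = (a - 1/N)*T*m - b*X1 - b*X2 + g*X3 + a*Y0 - b*X4 - b*X5 + g*X6"
  by (simp add: algebra_simps divide_inverse)

lemma case_lo:
  assumes i: "i < n" and s: "s < 2*n"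
  shows "cmod (Eperm n (\<lambda>\<sigma>. PMPM n M \<sigma> i s) - M i s * ((\<Sum>j<n. M (n+j) (n+j)) / of_nat n))
     \<le> 16 * (opnorm (2*n) M)\<^sup>2 / sqrt (real n)"
proof -
  define K where "K = opnorm (2*n) M"
  have n1: "n \<ge> 1" using i by simp
  have K0: "K \<ge> 0" unfolding K_def by (rule opnorm_nonneg)
  note R = RR[OF n1 K0]
  have i2: "i < 2*n" using i by simp
  have bT: "cmod (\<Sum>y<n. M (n+y) (n+y)) \<le> n * K" unfolding K_def using F_tr[of n n n M] by simp
  have bm: "cmod (M i s) \<le> K" unfolding K_def using F_entry[OF i2 s] .
  have blk: "cmod (\<Sum>y<n. \<Sum>w<n. M (n+y) (n+w)) \<le> K * n" unfolding K_def using F_blk[of n n n M] by simp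
  have blk2: "cmod (\<Sum>y<n. \<Sum>w<n. M (n+y) w) \<le> K * n" unfolding K_def using F_blk[of n n 0 M] by simp
  have colA: "cmod (\<Sum>k<n. M k s) \<le> K * sqrt n" unfolding K_def using F_col[of 0 n s M] s by simp
  have colDs: "cmod (\<Sum>k<n. M (n+k) s) \<le> K * sqrt n" unfolding K_def using F_col[of n n s M] s by simp
  have colDi: "cmod (\<Sum>k<n. M (n+k) i) \<le> K * sqrt n" unfolding K_def using F_col[of n n i M] i2 by simp
  have X1: "cmod (\<Sum>w<n. \<Sum>y<n. M (n+y) (n+w) * M i s) \<le> n * sqrt n * K\<^sup>2"
  proof -
    have "(\<Sum>w<n. \<Sum>y<n. M (n+y) (n+w) * M i s) = (\<Sum>y<n. \<Sum>w<n. M (n+y) (n+w)) * M i s"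
      by (subst sum.swap) (simp add: sum_distrib_right)
    thus ?thesis using order_trans[OF prod_bound[OF blk bm] R(1)] by simp
  qed
  have X2: "cmod (\<Sum>k<n. \<Sum>w<n. M (n+w) (n+w) * M k s) \<le> n * sqrt n * K\<^sup>2"
  proof -
    have "(\<Sum>k<n. \<Sum>w<n. M (n+w) (n+w) * M k s) = (\<Sum>y<n. M (n+y) (n+y)) * (\<Sum>k<n. M k s)"
      by (rule PRD)
    thus ?thesis using order_trans[OF prod_bound[OF bT colA] R(2)] by simp
  qed
  have X3: "cmod (\<Sum>k<n. \<Sum>w<n. \<Sum>y<n. M (n+y) (n+w) * M k s) \<le> n * sqrt n * K\<^sup>2"
  proof -
    have "(\<Sum>k<n. \<Sum>w<n. \<Sum>y<n. M (n+y) (n+w) * M k s) = (\<Sum>y<n. \<Sum>w<n. M (n+y) (n+w)) * (\<Sum>k<n. M k s)"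
      by (rule TRI)
    thus ?thesis using order_trans[OF prod_bound[OF blk colA] R(3)] by simp
  qed
  have Y0: "cmod (\<Sum>y<n. M (n+y) i * M (n+y) s) \<le> K\<^sup>2"
    unfolding K_def using F_en[of n n i s M] i2 s by simp
  have X4: "cmod (\<Sum>w<n. \<Sum>y<n. M (n+y) i * M (n+w) s) \<le> n * sqrt n * K\<^sup>2"
  proof -
    have "(\<Sum>w<n. \<Sum>y<n. M (n+y) i * M (n+w) s) = (\<Sum>k<n. M (n+k) i) * (\<Sum>k<n. M (n+k) s)"
      by (rule PRD)
    thus ?thesis using order_trans[OF prod_bound[OF colDi colDs] R(4)] by simp
  qed
  have X5: "cmod (\<Sum>k<n. \<Sum>w<n. M (n+w) k * M (n+w) s) \<le> n * sqrt n * K\<^sup>2"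
  proof -
    have "(\<Sum>k<n. \<Sum>w<n. M (n+w) k * M (n+w) s) = (\<Sum>y<n. \<Sum>w<n. M (n+y) s * M (n+y) (0+w))"
      by (subst sum.swap) (simp add: mult.commute)
    moreover have "cmod (\<Sum>y<n. \<Sum>w<n. M (n+y) s * M (n+y) (0+w)) \<le> K\<^sup>2 * sqrt n"
      unfolding K_def by (rule F_wt) (use s in auto)
    ultimately show ?thesis using R(5) by simp
  qed
  have X6: "cmod (\<Sum>k<n. \<Sum>w<n. \<Sum>y<n. M (n+y) k * M (n+w) s) \<le> n * sqrt n * K\<^sup>2"
  proof -
    have "(\<Sum>k<n. \<Sum>w<n. \<Sum>y<n. M (n+y) k * M (n+w) s) = (\<Sum>y<n. \<Sum>w<n. M (n+y) w) * (\<Sum>k<n. M (n+k) s)"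
      by (rule TRI2)
    thus ?thesis using order_trans[OF prod_bound[OF blk2 colDs] R(3)] by simp
  qed
  show ?thesis unfolding ALG_lo[OF E_lo[OF i]] K_def[symmetric]
    by (rule ABS[OF n1 K0 bT bm Y0 X1 X2 X3 X4 X5 X6])
qed


lemma case_hi:
  assumes i: "i < n" and s: "s < 2*n"
  shows "cmod (Eperm n (\<lambda>\<sigma>. PMPM n M \<sigma> (n+i) s) - M (n+i) s * ((\<Sum>j<n. M j j) / of_nat n))
     \<le> 16 * (opnorm (2*n) M)\<^sup>2 / sqrt (real n)"
proof -
  define K where "K = opnorm (2*n) M"
  have n1: "n \<ge> 1" using i by simp
  have K0: "K \<ge> 0" unfolding K_def by (rule opnorm_nonneg)
  note R = RR[OF n1 K0]
  have i2: "n + i < 2*n" using i by simp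
  have bT: "cmod (\<Sum>x<n. M x x) \<le> n * K" unfolding K_def using F_tr[of 0 n 0 M] by simp
  have bm: "cmod (M (n+i) s) \<le> K" unfolding K_def using F_entry[OF i2 s] .
  have blkA: "cmod (\<Sum>x<n. \<Sum>w<n. M x w) \<le> K * n" unfolding K_def using F_blk[of 0 n 0 M] by simp
  have blkB: "cmod (\<Sum>x<n. \<Sum>w<n. M x (n+w)) \<le> K * n" unfolding K_def using F_blk[of 0 n n M] by simp
  have colA: "cmod (\<Sum>k<n. M k s) \<le> K * sqrt n" unfolding K_def using F_col[of 0 n s M] s by simp
  have colDs: "cmod (\<Sum>k<n. M (n+k) s) \<le> K * sqrt n" unfolding K_def using F_col[of n n s M] s by simp
  have colBi: "cmod (\<Sum>k<n. M k (n+i)) \<le> K * sqrt n" unfolding K_def using F_col[of 0 n "n+i" M] i2 by simp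
  have Y0: "cmod (\<Sum>x<n. M x (n+i) * M x s) \<le> K\<^sup>2"
    unfolding K_def using F_en[of 0 n "n+i" s M] i2 s by simp
  have X4: "cmod (\<Sum>k<n. \<Sum>x<n. M x (n+i) * M k s) \<le> n * sqrt n * K\<^sup>2"
  proof -
    have "(\<Sum>k<n. \<Sum>x<n. M x (n+i) * M k s) = (\<Sum>k<n. M k (n+i)) * (\<Sum>k<n. M k s)"
      by (rule PRD)
    thus ?thesis using order_trans[OF prod_bound[OF colBi colA] R(4)] by simp
  qed
  have X5: "cmod (\<Sum>w<n. \<Sum>k<n. M k (n+w) * M k s) \<le> n * sqrt n * K\<^sup>2"
  proof -
    have "(\<Sum>w<n. \<Sum>k<n. M k (n+w) * M k s) = (\<Sum>y<n. \<Sum>w<n. M (0+y) s * M (0+y) (n+w))"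
      by (subst sum.swap) (simp add: mult.commute)
    moreover have "cmod (\<Sum>y<n. \<Sum>w<n. M (0+y) s * M (0+y) (n+w)) \<le> K\<^sup>2 * sqrt n"
      unfolding K_def by (rule F_wt) (use s in auto)
    ultimately show ?thesis using R(5) by simp
  qed
  have X6: "cmod (\<Sum>w<n. \<Sum>k<n. \<Sum>x<n. M x (n+w) * M k s) \<le> n * sqrt n * K\<^sup>2"
  proof -
    have "(\<Sum>w<n. \<Sum>k<n. \<Sum>x<n. M x (n+w) * M k s) = (\<Sum>x<n. \<Sum>w<n. M x (n+w)) * (\<Sum>k<n. M k s)"
      by (rule TRI3)
    thus ?thesis using order_trans[OF prod_bound[OF blkB colA] R(3)] by simp
  qed
  have X1: "cmod (\<Sum>x'<n. \<Sum>x<n. M x x' * M (n+i) s) \<le> n * sqrt n * K\<^sup>2"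
  proof -
    have "(\<Sum>x'<n. \<Sum>x<n. M x x' * M (n+i) s) = (\<Sum>x<n. \<Sum>w<n. M x w) * M (n+i) s"
      by (subst sum.swap) (simp add: sum_distrib_right)
    thus ?thesis using order_trans[OF prod_bound[OF blkA bm] R(1)] by simp
  qed
  have X2: "cmod (\<Sum>k<n. \<Sum>x'<n. M x' x' * M (n+k) s) \<le> n * sqrt n * K\<^sup>2"
  proof -
    have "(\<Sum>k<n. \<Sum>x'<n. M x' x' * M (n+k) s) = (\<Sum>x<n. M x x) * (\<Sum>k<n. M (n+k) s)"
      by (rule PRD)
    thus ?thesis using order_trans[OF prod_bound[OF bT colDs] R(2)] by simp
  qed
  have X3: "cmod (\<Sum>k<n. \<Sum>x'<n. \<Sum>x<n. M x x' * M (n+k) s) \<le> n * sqrt n * K\<^sup>2"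
  proof -
    have "(\<Sum>k<n. \<Sum>x'<n. \<Sum>x<n. M x x' * M (n+k) s) = (\<Sum>x<n. \<Sum>w<n. M x w) * (\<Sum>k<n. M (n+k) s)"
      by (rule TRI)
    thus ?thesis using order_trans[OF prod_bound[OF blkA colDs] R(3)] by simp
  qed
  show ?thesis unfolding ALG_hi[OF E_hi[OF i]] K_def[symmetric]
    by (rule ABS[OF n1 K0 bT bm Y0 X1 X2 X3 X4 X5 X6])
qed

theorem lemma7p4:
  "\<exists>C::real. \<forall>n::nat. \<forall>M::nat \<Rightarrow> nat \<Rightarrow> complex. \<forall>i<n.
     cmod (Eperm n (\<lambda>\<sigma>. PMPM n M \<sigma> i i)
        - M i i * ((\<Sum>j<n. M (n+j) (n+j)) / of_nat n)) \<le> C * (opnorm (2*n) M)\<^sup>2 / sqrt (real n)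
   \<and> cmod (Eperm n (\<lambda>\<sigma>. PMPM n M \<sigma> (n+i) (n+i))
        - M (n+i) (n+i) * ((\<Sum>j<n. M j j) / of_nat n)) \<le> C * (opnorm (2*n) M)\<^sup>2 / sqrt (real n)
   \<and> cmod (Eperm n (\<lambda>\<sigma>. PMPM n M \<sigma> (n+i) i)
        - M (n+i) i * ((\<Sum>j<n. M j j) / of_nat n)) \<le> C * (opnorm (2*n) M)\<^sup>2 / sqrt (real n)
   \<and> cmod (Eperm n (\<lambda>\<sigma>. PMPM n M \<sigma> i (n+i))
        - M i (n+i) * ((\<Sum>j<n. M (n+j) (n+j)) / of_nat n)) \<le> C * (opnorm (2*n) M)\<^sup>2 / sqrt (real n)"
proof (intro exI[of _ 16] allI impI conjI)
  fix n :: nat and M :: "nat \<Rightarrow> nat \<Rightarrow> complex" and i assume i: "i < n"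
  have a: "i < 2*n" "n + i < 2*n" using i by simp_all
  show "cmod (Eperm n (\<lambda>\<sigma>. PMPM n M \<sigma> i i)
        - M i i * ((\<Sum>j<n. M (n+j) (n+j)) / of_nat n)) \<le> 16 * (opnorm (2*n) M)\<^sup>2 / sqrt (real n)"
    by (rule case_lo[OF i a(1)])
  show "cmod (Eperm n (\<lambda>\<sigma>. PMPM n M \<sigma> (n+i) (n+i))
        - M (n+i) (n+i) * ((\<Sum>j<n. M j j) / of_nat n)) \<le> 16 * (opnorm (2*n) M)\<^sup>2 / sqrt (real n)"
    by (rule case_hi[OF i a(2)])
  show "cmod (Eperm n (\<lambda>\<sigma>. PMPM n M \<sigma> (n+i) i)
        - M (n+i) i * ((\<Sum>j<n. M j j) / of_nat n)) \<le> 16 * (opnorm (2*n) M)\<^sup>2 / sqrt (real n)"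
    by (rule case_hi[OF i a(1)])
  show "cmod (Eperm n (\<lambda>\<sigma>. PMPM n M \<sigma> i (n+i))
        - M i (n+i) * ((\<Sum>j<n. M (n+j) (n+j)) / of_nat n)) \<le> 16 * (opnorm (2*n) M)\<^sup>2 / sqrt (real n)"
    by (rule case_lo[OF i a(2)])
qed


end
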